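(* Let $k$ be a positive integer and suppose the graph $G$ satisfies $\tau(G)=\overline{\tau}(G)=\kappa'(G)=\overline{\kappa'}(G)=k$. Then $G=G_1*_k G_2$ where, for each $i=1,2$, either $G_i=K_1$ or $\tau(G_i)=\overline{\tau}(G_i)=\kappa'(G_i)=\overline{\kappa'}(G_i)=k$.
   Context: Graphs are finite, loopless, possibly with multiple edges. $\kappa'(G)$ is the edge connectivity; $\tau(G)$ is the maximum number of edge-disjoint spanning trees of a connected graph $G$ ($\tau(K_1)=\infty$). $\overline{\kappa'}(G)=\max\{\kappa'(H): H\subseteq G\}$ and $\overline{\tau}(G)=\max\{\tau(H): H\subseteq G\}$, maxima over subgraphs. For vertex-disjoint connected graphs $G_1,G_2$ and a set $K$ of $k$ edges each having one end in $V(G_1)$ and the other in $V(G_2)$, the $k$-edge-join $G_1*_k G_2$ is the graph with vertex set $V(G_1)\cup V(G_2)$ and edge set $E(G_1)\cup E(G_2)\cup K$. *)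

theory Defs
  imports Main "HOL-Library.Extended_Nat"
begin

text \<open>Finite loopless multigraphs.  Edges are elements of an abstract type 'e;
  the incidence map inc assigns to every edge its set of two (distinct) ends.\<close>

definition graph :: "('e \<Rightarrow> 'a set) \<Rightarrow> 'a set \<Rightarrow> 'e set \<Rightarrow> bool" where
  "graph inc V E \<longleftrightarrow> finite V \<and> V \<noteq> {} \<and> finite E \<and>
     (\<forall>e\<in>E. inc e \<subseteq> V \<and> card (inc e) = 2)"

definition adj :: "('e \<Rightarrow> 'a set) \<Rightarrow> 'e set \<Rightarrow> ('a \<times> 'a) set" where
  "adj inc E = {(x, y). \<exists>e\<in>E. inc e = {x, y}}"

definition connected_graph :: "('e \<Rightarrow> 'a set) \<Rightarrow> 'a set \<Rightarrow> 'e set \<Rightarrow> bool" where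
  "connected_graph inc V E \<longleftrightarrow> (\<forall>u\<in>V. \<forall>v\<in>V. (u, v) \<in> (adj inc E)\<^sup>*)"

definition acyclic_edges :: "('e \<Rightarrow> 'a set) \<Rightarrow> 'e set \<Rightarrow> bool" where
  "acyclic_edges inc T \<longleftrightarrow>
     (\<forall>e\<in>T. \<forall>x y. inc e = {x, y} \<longrightarrow> (x, y) \<notin> (adj inc (T - {e}))\<^sup>*)"

definition spanning_tree :: "('e \<Rightarrow> 'a set) \<Rightarrow> 'a set \<Rightarrow> 'e set \<Rightarrow> 'e set \<Rightarrow> bool" where
  "spanning_tree inc V E T \<longleftrightarrow> T \<subseteq> E \<and> connected_graph inc V T \<and> acyclic_edges inc T"

text \<open>tau: maximum number of edge-disjoint spanning trees (infinite for K_1).\<close>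
definition tau :: "('e \<Rightarrow> 'a set) \<Rightarrow> 'a set \<Rightarrow> 'e set \<Rightarrow> enat" where
  "tau inc V E = Sup {enat n | n. \<exists>T :: nat \<Rightarrow> 'e set.
      (\<forall>i<n. spanning_tree inc V E (T i)) \<and>
      (\<forall>i<n. \<forall>j<n. i \<noteq> j \<longrightarrow> T i \<inter> T j = {})}"

text \<open>Edge connectivity: minimum size of an edge set whose removal disconnects
  the graph (infinite for K_1, where no such set exists).\<close>
definition kappa' :: "('e \<Rightarrow> 'a set) \<Rightarrow> 'a set \<Rightarrow> 'e set \<Rightarrow> enat" where
  "kappa' inc V E = Inf {enat (card F) | F. F \<subseteq> E \<and> \<not> connected_graph inc V (E - F)}"

definition subgraph :: "('e \<Rightarrow> 'a set) \<Rightarrow> 'a set \<Rightarrow> 'e set \<Rightarrow> 'a set \<Rightarrow> 'e set \<Rightarrow> bool" where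
  "subgraph inc V' E' V E \<longleftrightarrow> V' \<subseteq> V \<and> E' \<subseteq> E \<and> (\<forall>e\<in>E'. inc e \<subseteq> V')"

definition tau_bar :: "('e \<Rightarrow> 'a set) \<Rightarrow> 'a set \<Rightarrow> 'e set \<Rightarrow> enat" where
  "tau_bar inc V E = Sup {tau inc V' E' | V' E'. subgraph inc V' E' V E \<and> card V' \<ge> 2}"

definition kappa'_bar :: "('e \<Rightarrow> 'a set) \<Rightarrow> 'a set \<Rightarrow> 'e set \<Rightarrow> enat" where
  "kappa'_bar inc V E = Sup {kappa' inc V' E' | V' E'. subgraph inc V' E' V E \<and> card V' \<ge> 2}"

definition is_K1 :: "'a set \<Rightarrow> 'e set \<Rightarrow> bool" where
  "is_K1 V E \<longleftrightarrow> card V = 1 \<and> E = {}"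

definition is_edge_join :: "('e \<Rightarrow> 'a set) \<Rightarrow> 'a set \<Rightarrow> 'e set \<Rightarrow> 'a set \<Rightarrow> 'e set
    \<Rightarrow> 'a set \<Rightarrow> 'e set \<Rightarrow> nat \<Rightarrow> bool" where
  "is_edge_join inc V E V1 E1 V2 E2 k \<longleftrightarrow>
     V1 \<inter> V2 = {} \<and> V = V1 \<union> V2 \<and>
     graph inc V1 E1 \<and> graph inc V2 E2 \<and>
     connected_graph inc V1 E1 \<and> connected_graph inc V2 E2 \<and>
     (\<exists>K. card K = k \<and> E = E1 \<union> E2 \<union> K \<and> K \<inter> E1 = {} \<and> K \<inter> E2 = {} \<and>
          (\<forall>e\<in>K. \<exists>x\<in>V1. \<exists>y\<in>V2. inc e = {x, y}))"

end

theory Submission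
  imports Defs
begin

lemma Sup_enat_attained:
  fixes A :: "enat set"
  assumes "Sup A = enat k" "k > 0"
  shows "enat k \<in> A"
proof -
  have "A \<noteq> {}" using assms by (auto simp: Sup_enat_def zero_enat_def)
  moreover have "finite A" using assms \<open>A \<noteq> {}\<close> by (auto simp: Sup_enat_def split: if_splits)
  ultimately have "Max A \<in> A" using Max_in by blast
  moreover have "Sup A = Max A" using \<open>A \<noteq> {}\<close> \<open>finite A\<close> by (simp add: Sup_enat_def)
  ultimately show ?thesis using assms(1) by metis
qed

lemma Inf_enat_attained:
  fixes A :: "enat set"
  assumes "Inf A = enat k"
  shows "enat k \<in> A"
proof -
  have "A \<noteq> {}" using assms by (auto simp: Inf_enat_def)
  then obtain x where "x \<in> A" by auto
  then have "(LEAST x. x \<in> A) \<in> A" by (rule LeastI)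
  then show ?thesis using assms \<open>A \<noteq> {}\<close> by (auto simp: Inf_enat_def)
qed

lemma adj_mono: "S \<subseteq> T \<Longrightarrow> adj inc S \<subseteq> adj inc T"
  unfolding adj_def by auto

lemma rt_mono: "S \<subseteq> T \<Longrightarrow> (adj inc S)\<^sup>* \<subseteq> (adj inc T)\<^sup>*"
  by (intro rtrancl_mono adj_mono)

lemma conn_mono: "connected_graph inc V T \<Longrightarrow> T \<subseteq> E \<Longrightarrow> connected_graph inc V E"
  unfolding connected_graph_def using rt_mono by blast

lemma acyc_mono: "acyclic_edges inc T \<Longrightarrow> S \<subseteq> T \<Longrightarrow> acyclic_edges inc S"
  unfolding acyclic_edges_def
proof (intro ballI allI impI)
  fix e x y assume a: "\<forall>e\<in>T. \<forall>x y. inc e = {x, y} \<longrightarrow> (x, y) \<notin> (adj inc (T - {e}))\<^sup>*"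
    and s: "S \<subseteq> T" and e: "e \<in> S" and i: "inc e = {x, y}"
  have "(adj inc (S - {e}))\<^sup>* \<subseteq> (adj inc (T - {e}))\<^sup>*" using s by (intro rt_mono) auto
  then show "(x, y) \<notin> (adj inc (S - {e}))\<^sup>*" using a e s i by blast
qed

lemma stay:
  assumes "(u, w) \<in> (adj inc S)\<^sup>*" "u \<in> A"
    and "\<And>e x y. e \<in> S \<Longrightarrow> inc e = {x, y} \<Longrightarrow> x \<in> A \<Longrightarrow> y \<in> A"
  shows "w \<in> A"
  using assms(1,2)
proof (induction rule: rtrancl_induct)
  case base then show ?case .
next
  case (step y z)
  then obtain e where "e \<in> S" "inc e = {y, z}" unfolding adj_def by auto
  then show ?case using step assms(3) by blast
qed

lemma restrict:
  assumes conn: "connected_graph inc (V1 \<union> V2) T"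
    and T: "T \<subseteq> E1 \<union> E2 \<union> {e0}"
    and h1: "\<forall>e\<in>E1. inc e \<subseteq> V1" and h2: "\<forall>e\<in>E2. inc e \<subseteq> V2"
    and e0: "inc e0 = {x0, y0}" "x0 \<in> V1" "y0 \<in> V2" and disj: "V1 \<inter> V2 = {}"
  shows "connected_graph inc V1 (T \<inter> E1)"
  unfolding connected_graph_def
proof (intro ballI)
  fix a b assume a: "a \<in> V1" and b: "b \<in> V1"
  let ?R = "(adj inc (T \<inter> E1))\<^sup>*"
  have ab: "(a, b) \<in> (adj inc T)\<^sup>*" using conn a b unfolding connected_graph_def by auto
  have claim: "(w \<in> V1 \<longrightarrow> (a, w) \<in> ?R) \<and> (w \<in> V2 \<longrightarrow> (a, x0) \<in> ?R)"
    if "(a, w) \<in> (adj inc T)\<^sup>*" for w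
    using that
  proof (induction rule: rtrancl_induct)
    case base then show ?case using a disj by auto
  next
    case (step w z)
    then obtain e where eT: "e \<in> T" and ie: "inc e = {w, z}" unfolding adj_def by auto
    from eT T have "e \<in> E1 \<or> e \<in> E2 \<or> e = e0" by auto
    then show ?case
    proof (elim disjE)
      assume "e \<in> E1"
      then have w1: "w \<in> V1" and z1: "z \<in> V1" using h1 ie by auto
      have "(w, z) \<in> adj inc (T \<inter> E1)" using eT \<open>e \<in> E1\<close> ie unfolding adj_def by auto
      then have "(a, z) \<in> ?R" using step.IH w1 by (meson rtrancl.rtrancl_into_rtrancl)
      then show ?thesis using z1 disj by auto
    next
      assume "e \<in> E2"
      then have "w \<in> V2" "z \<in> V2" using h2 ie by auto
      then show ?thesis using step.IH disj by auto
    next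
      assume "e = e0"
      then have "{w, z} = {x0, y0}" using ie e0 by simp
      moreover have "x0 \<noteq> y0" using e0 disj by auto
      ultimately have "(w = x0 \<and> z = y0) \<or> (w = y0 \<and> z = x0)" by (auto simp: doubleton_eq_iff)
      then show ?thesis using step.IH e0 disj by auto
    qed
  qed
  show "(a, b) \<in> ?R" using claim[OF ab] b by auto
qed

lemma subgraph_trans:
  "subgraph inc V' E' V1 E1 \<Longrightarrow> subgraph inc V1 E1 V E \<Longrightarrow> subgraph inc V' E' V E"
  unfolding subgraph_def by auto

lemma side:
  fixes inc :: "'e \<Rightarrow> 'a set"
  assumes G: "graph inc V E" and k: "k > 0"
    and tb: "tau_bar inc V E = enat k" and kb: "kappa'_bar inc V E = enat k"
    and sub: "subgraph inc V1 E1 V E" and gr: "graph inc V1 E1"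
    and trees: "\<forall>i<k. spanning_tree inc V1 E1 (T i)"
    and dis: "\<forall>i<k. \<forall>j<k. i \<noteq> j \<longrightarrow> T i \<inter> T j = {}"
  shows "is_K1 V1 E1 \<or> (tau inc V1 E1 = enat k \<and> tau_bar inc V1 E1 = enat k \<and>
                            kappa' inc V1 E1 = enat k \<and> kappa'_bar inc V1 E1 = enat k)"
proof (cases "card V1 \<ge> 2")
  case False
  have "finite V1" "V1 \<noteq> {}" using gr unfolding graph_def by auto
  then have c1: "card V1 = 1" using False by (metis One_nat_def card_0_eq less_2_cases not_le)
  have "E1 = {}"
  proof (rule ccontr)
    assume "E1 \<noteq> {}" then obtain e where "e \<in> E1" by auto
    then have "inc e \<subseteq> V1" "card (inc e) = 2" using gr unfolding graph_def by auto
    then have "card (inc e) \<le> card V1" using \<open>finite V1\<close> by (intro card_mono) auto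
    then show False using c1 \<open>card (inc e) = 2\<close> by simp
  qed
  then show ?thesis using c1 unfolding is_K1_def by auto
next
  case True
  have self: "subgraph inc V1 E1 V1 E1" using sub unfolding subgraph_def by auto
  have tge: "tau inc V1 E1 \<ge> enat k" unfolding tau_def
    by (rule Sup_upper) (use trees dis in blast)
  have tle: "tau inc V1 E1 \<le> enat k" unfolding tb[symmetric] tau_bar_def
    by (rule Sup_upper) (use sub True in blast)
  have kge: "kappa' inc V1 E1 \<ge> enat k" unfolding kappa'_def
  proof (rule Inf_greatest, safe)
    fix F assume F: "F \<subseteq> E1" and nc: "\<not> connected_graph inc V1 (E1 - F)"
    have "\<forall>i<k. \<exists>f. f \<in> T i \<inter> F"
    proof (intro allI impI)
      fix i assume "i < k"
      then have st: "spanning_tree inc V1 E1 (T i)" using trees by auto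
      show "\<exists>f. f \<in> T i \<inter> F"
      proof (rule ccontr)
        assume "\<not> ?thesis"
        then have "T i \<subseteq> E1 - F" using st unfolding spanning_tree_def by auto
        then show False using nc conn_mono st unfolding spanning_tree_def by blast
      qed
    qed
    define g where "g i = (SOME f. f \<in> T i \<inter> F)" for i
    have g: "\<forall>i<k. g i \<in> T i \<inter> F"
    proof (intro allI impI)
      fix i assume "i < k"
      then obtain f where "f \<in> T i \<inter> F" using \<open>\<forall>i<k. \<exists>f. f \<in> T i \<inter> F\<close> by blast
      then show "g i \<in> T i \<inter> F" unfolding g_def by (rule someI)
    qed
    have "inj_on g {..<k}"
    proof (rule inj_onI)
      fix i j assume ij: "i \<in> {..<k}" "j \<in> {..<k}" "g i = g j"
      show "i = j"
      proof (rule ccontr)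
        assume "i \<noteq> j"
        then have "T i \<inter> T j = {}" using dis ij by auto
        moreover have "g i \<in> T i" "g j \<in> T j" using g ij by auto
        ultimately show False using ij by auto
      qed
    qed
    moreover have "g ` {..<k} \<subseteq> F" using g by auto
    moreover have "finite F" using F gr finite_subset unfolding graph_def by auto
    ultimately have "card {..<k} \<le> card F" by (intro card_inj_on_le)
    then show "enat k \<le> enat (card F)" by simp
  qed
  have kle: "kappa' inc V1 E1 \<le> enat k" unfolding kb[symmetric] kappa'_bar_def
    by (rule Sup_upper) (use sub True in blast)
  have tb1: "tau_bar inc V1 E1 = enat k"
  proof (rule antisym)
    show "tau_bar inc V1 E1 \<le> enat k" unfolding tb[symmetric] tau_bar_def
      by (rule Sup_subset_mono) (use sub subgraph_trans in blast)
    have "tau inc V1 E1 \<le> tau_bar inc V1 E1" unfolding tau_bar_def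
      by (rule Sup_upper) (use self True in blast)
    then show "enat k \<le> tau_bar inc V1 E1" using tge by simp
  qed
  have kb1: "kappa'_bar inc V1 E1 = enat k"
  proof (rule antisym)
    show "kappa'_bar inc V1 E1 \<le> enat k" unfolding kb[symmetric] kappa'_bar_def
      by (rule Sup_subset_mono) (use sub subgraph_trans in blast)
    have "kappa' inc V1 E1 \<le> kappa'_bar inc V1 E1" unfolding kappa'_bar_def
      by (rule Sup_upper) (use self True in blast)
    then show "enat k \<le> kappa'_bar inc V1 E1" using kge by simp
  qed
  show ?thesis using tge tle kge kle tb1 kb1 by auto
qed

theorem lemma3p7:
  fixes inc :: "'e \<Rightarrow> 'a set" and V :: "'a set" and E :: "'e set" and k :: nat
  assumes "graph inc V E"
    and "k > 0"
    and "tau inc V E = enat k"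
    and "tau_bar inc V E = enat k"
    and "kappa' inc V E = enat k"
    and "kappa'_bar inc V E = enat k"
  shows "\<exists>V1 E1 V2 E2. is_edge_join inc V E V1 E1 V2 E2 k \<and>
           (is_K1 V1 E1 \<or> (tau inc V1 E1 = enat k \<and> tau_bar inc V1 E1 = enat k \<and>
                            kappa' inc V1 E1 = enat k \<and> kappa'_bar inc V1 E1 = enat k)) \<and>
           (is_K1 V2 E2 \<or> (tau inc V2 E2 = enat k \<and> tau_bar inc V2 E2 = enat k \<and>
                            kappa' inc V2 E2 = enat k \<and> kappa'_bar inc V2 E2 = enat k))"
proof -
  note G = assms(1)
  have k: "k > 0" by fact
  have finE: "finite E" and finV: "finite V" and edges: "\<And>e. e \<in> E \<Longrightarrow> inc e \<subseteq> V \<and> card (inc e) = 2"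
    using G unfolding graph_def by auto
  have "enat k \<in> {enat n | n. \<exists>T :: nat \<Rightarrow> 'e set.
      (\<forall>i<n. spanning_tree inc V E (T i)) \<and>
      (\<forall>i<n. \<forall>j<n. i \<noteq> j \<longrightarrow> T i \<inter> T j = {})}"
    using Sup_enat_attained[OF assms(3)[unfolded tau_def] k] .
  then obtain T :: "nat \<Rightarrow> 'e set" where trees: "\<forall>i<k. spanning_tree inc V E (T i)"
    and dis: "\<forall>i<k. \<forall>j<k. i \<noteq> j \<longrightarrow> T i \<inter> T j = {}" by auto
  have "enat k \<in> {enat (card F) | F. F \<subseteq> E \<and> \<not> connected_graph inc V (E - F)}"
    using Inf_enat_attained[OF assms(5)[unfolded kappa'_def]] .
  then obtain F where FE: "F \<subseteq> E" and cF: "card F = k" and ncF: "\<not> connected_graph inc V (E - F)"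
    by auto
  have kmin: "k \<le> card F'" if "F' \<subseteq> E" "\<not> connected_graph inc V (E - F')" for F'
  proof -
    have "Inf {enat (card F) | F. F \<subseteq> E \<and> \<not> connected_graph inc V (E - F)} \<le> enat (card F')"
      by (rule Inf_lower) (use that in blast)
    then show ?thesis using assms(5) unfolding kappa'_def by simp
  qed
  from ncF obtain u v where uV: "u \<in> V" and vV: "v \<in> V" and nuv: "(u, v) \<notin> (adj inc (E - F))\<^sup>*"
    unfolding connected_graph_def by auto
  define V1 where "V1 = {x \<in> V. (u, x) \<in> (adj inc (E - F))\<^sup>*}"
  define V2 where "V2 = V - V1"
  define E1 where "E1 = {e \<in> E. inc e \<subseteq> V1}"
  define E2 where "E2 = {e \<in> E. inc e \<subseteq> V2}"
  define K where "K = {e \<in> E. \<not> inc e \<subseteq> V1 \<and> \<not> inc e \<subseteq> V2}"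
  have u1: "u \<in> V1" using uV unfolding V1_def by auto
  have v2: "v \<in> V2" using vV nuv unfolding V1_def V2_def by auto
  have disj: "V1 \<inter> V2 = {}" and VU: "V = V1 \<union> V2" unfolding V2_def V1_def by auto
  have EU: "E = E1 \<union> E2 \<union> K" unfolding E1_def E2_def K_def by auto
  have h1: "\<forall>e\<in>E1. inc e \<subseteq> V1" and h2: "\<forall>e\<in>E2. inc e \<subseteq> V2" unfolding E1_def E2_def by auto
  have KE1: "K \<inter> E1 = {}" and KE2: "K \<inter> E2 = {}" unfolding K_def E1_def E2_def by auto
  have cross: "\<exists>x\<in>V1. \<exists>y\<in>V2. inc e = {x, y}" if "e \<in> K" for e
  proof -
    have eE: "e \<in> E" and n1: "\<not> inc e \<subseteq> V1" and n2: "\<not> inc e \<subseteq> V2" using that unfolding K_def by auto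
    obtain a b where ab: "inc e = {a, b}" "a \<noteq> b" using edges[OF eE] by (auto simp: card_2_iff)
    have "a \<in> V" "b \<in> V" using edges[OF eE] ab by auto
    then have "(a \<in> V1 \<and> b \<in> V2) \<or> (a \<in> V2 \<and> b \<in> V1)" using n1 n2 ab VU by auto
    then show ?thesis using ab by (metis insert_commute)
  qed
  have KF: "K \<subseteq> F"
  proof
    fix e assume eK: "e \<in> K"
    then obtain x y where xy: "x \<in> V1" "y \<in> V2" "inc e = {x, y}" using cross by blast
    show "e \<in> F"
    proof (rule ccontr)
      assume "e \<notin> F"
      then have "(x, y) \<in> adj inc (E - F)" using eK xy unfolding K_def adj_def by auto
      then have "y \<in> V1" using xy edges eK unfolding V1_def K_def by (auto intro: rtrancl_into_rtrancl)
      then show False using xy disj by auto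
    qed
  qed
  have ncK: "(u, v) \<notin> (adj inc (E - K))\<^sup>*"
  proof
    assume "(u, v) \<in> (adj inc (E - K))\<^sup>*"
    then have "v \<in> V1"
    proof (rule stay[OF _ u1])
      fix e x y assume e: "e \<in> E - K" "inc e = {x, y}" "x \<in> V1"
      then have "e \<in> E1 \<or> e \<in> E2" using EU by auto
      moreover have "x \<in> inc e" "y \<in> inc e" using e by auto
      ultimately show "y \<in> V1" using e(3) h1 h2 disj by blast
    qed
    then show False using v2 disj by auto
  qed
  have finK: "finite K" using finE unfolding K_def by auto
  have cK: "card K = k"
  proof (rule antisym)
    show "card K \<le> k" using cF KF card_mono FE finE finite_subset by metis
    show "k \<le> card K"
      by (rule kmin) (use ncK uV vV in \<open>auto simp: K_def connected_graph_def\<close>)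
  qed
  have meet: "\<exists>f. f \<in> T i \<inter> K" if "i < k" for i
  proof (rule ccontr)
    assume "\<not> ?thesis"
    moreover have st: "spanning_tree inc V E (T i)" using trees that by auto
    ultimately have "T i \<subseteq> E - K" unfolding spanning_tree_def by auto
    then have "connected_graph inc V (E - K)" using conn_mono st unfolding spanning_tree_def by blast
    then show False using ncK uV vV unfolding connected_graph_def by auto
  qed
  define g where "g i = (SOME f. f \<in> T i \<inter> K)" for i
  have g: "\<forall>i<k. g i \<in> T i \<inter> K"
  proof (intro allI impI)
    fix i assume "i < k"
    then obtain f where "f \<in> T i \<inter> K" using meet by blast
    then show "g i \<in> T i \<inter> K" unfolding g_def by (rule someI)
  qed
  have inj: "inj_on g {..<k}"
  proof (rule inj_onI)
    fix i j assume ij: "i \<in> {..<k}" "j \<in> {..<k}" "g i = g j"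
    show "i = j"
    proof (rule ccontr)
      assume "i \<noteq> j"
      then have "T i \<inter> T j = {}" using dis ij by auto
      moreover have "g i \<in> T i" "g j \<in> T j" using g ij by auto
      ultimately show False using ij by auto
    qed
  qed
  have gK: "g ` {..<k} = K"
  proof (rule card_subset_eq[OF finK])
    show "g ` {..<k} \<subseteq> K" using g by auto
    show "card (g ` {..<k}) = card K" using card_image[OF inj] cK by simp
  qed
  have TK: "T i \<inter> K = {g i}" if "i < k" for i
  proof
    show "{g i} \<subseteq> T i \<inter> K" using g that by auto
    show "T i \<inter> K \<subseteq> {g i}"
    proof
      fix e assume e: "e \<in> T i \<inter> K"
      then obtain j where j: "j < k" "e = g j" using gK by auto
      have "e \<in> T j" using g j by auto
      then have "i = j" using dis e that j by blast
      then show "e \<in> {g i}" using j by simp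
    qed
  qed
  have Tsub: "T i \<subseteq> E1 \<union> E2 \<union> {g i}" if "i < k" for i
    using TK[OF that] trees that EU unfolding spanning_tree_def by blast
  have conn1: "connected_graph inc V1 (T i \<inter> E1)" if ik: "i < k" for i
  proof -
    obtain x0 y0 where xy: "x0 \<in> V1" "y0 \<in> V2" "inc (g i) = {x0, y0}" using cross g ik by blast
    have "connected_graph inc (V1 \<union> V2) (T i)" using trees that VU unfolding spanning_tree_def by auto
    then show ?thesis using restrict[OF _ Tsub[OF that] h1 h2 xy(3) xy(1) xy(2) disj] by simp
  qed
  have conn2: "connected_graph inc V2 (T i \<inter> E2)" if ik: "i < k" for i
  proof -
    obtain x0 y0 where xy: "x0 \<in> V1" "y0 \<in> V2" "inc (g i) = {x0, y0}" using cross g ik by blast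
    have "connected_graph inc (V2 \<union> V1) (T i)" using trees ik VU Un_commute[of V1 V2] unfolding spanning_tree_def by metis
    moreover have "T i \<subseteq> E2 \<union> E1 \<union> {g i}" using Tsub[OF that] by auto
    moreover have "inc (g i) = {y0, x0}" using xy by auto
    moreover have "V2 \<inter> V1 = {}" using disj by auto
    ultimately show ?thesis using restrict[of inc V2 V1 "T i" E2 E1 "g i" y0 x0] h1 h2 xy by blast
  qed
  have gr1: "graph inc V1 E1" using G u1 h1 edges unfolding graph_def E1_def V1_def by auto
  have gr2: "graph inc V2 E2" using G v2 h2 edges unfolding graph_def E2_def V2_def by auto
  have sub1: "subgraph inc V1 E1 V E" using h1 VU unfolding subgraph_def E1_def by auto
  have sub2: "subgraph inc V2 E2 V E" using h2 VU unfolding subgraph_def E2_def by auto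
  have st1: "\<forall>i<k. spanning_tree inc V1 E1 (T i \<inter> E1)"
    using conn1 trees acyc_mono unfolding spanning_tree_def by blast
  have st2: "\<forall>i<k. spanning_tree inc V2 E2 (T i \<inter> E2)"
    using conn2 trees acyc_mono unfolding spanning_tree_def by blast
  have dis1: "\<forall>i<k. \<forall>j<k. i \<noteq> j \<longrightarrow> (T i \<inter> E1) \<inter> (T j \<inter> E1) = {}" using dis by blast
  have dis2: "\<forall>i<k. \<forall>j<k. i \<noteq> j \<longrightarrow> (T i \<inter> E2) \<inter> (T j \<inter> E2) = {}" using dis by blast
  have c1: "connected_graph inc V1 E1" using conn1[OF k] conn_mono by blast
  have c2: "connected_graph inc V2 E2" using conn2[OF k] conn_mono by blast
  have join: "is_edge_join inc V E V1 E1 V2 E2 k"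
    unfolding is_edge_join_def using disj VU gr1 gr2 c1 c2 cK EU KE1 KE2 cross by blast
  show ?thesis
    using join side[OF G k assms(4) assms(6) sub1 gr1 st1 dis1]
      side[OF G k assms(4) assms(6) sub2 gr2 st2 dis2] by blast
qed

end
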